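(* Let $(\mathfrak{g},[\cdot,\cdot]_{\mathfrak{g}})$ be a Leibniz algebra over a field $\mathbf{K}$, $(V;\rho^L,\rho^R)$ a representation, $T:V\to\mathfrak{g}$ a relative Rota-Baxter operator, and $T_t=\sum_{i=0}^n\mathfrak{T}_it^i$ an order $n$ deformation of $T$. Define $\mathrm{Ob}_T\in C^2(V,\mathfrak{g})$ by $\mathrm{Ob}_T(u,v)=\sum_{i+j=n+1,\ i,j\ge1}\big([\mathfrak{T}_iu,\mathfrak{T}_jv]_{\mathfrak{g}}-\mathfrak{T}_i(\rho^L(\mathfrak{T}_ju)v+\rho^R(\mathfrak{T}_jv)u)\big)$. Then $\partial_T\mathrm{Ob}_T=0$, i.e. $\mathrm{Ob}_T$ is a 2-cocycle.
   Context: A Leibniz algebra is a vector space $\mathfrak{g}$ with bilinear $[\cdot,\cdot]_{\mathfrak{g}}$ satisfying $[x,[y,z]_{\mathfrak{g}}]_{\mathfrak{g}}=[[x,y]_{\mathfrak{g}},z]_{\mathfrak{g}}+[y,[x,z]_{\mathfrak{g}}]_{\mathfrak{g}}$. A representation $(V;\rho^L,\rho^R)$: linear $\rho^L,\rho^R:\mathfrak{g}\to\mathfrak{gl}(V)$ with $\rho^L([x,y]_{\mathfrak{g}})=[\rho^L(x),\rho^L(y)]$, $\rho^R([x,y]_{\mathfrak{g}})=[\rho^L(x),\rho^R(y)]$, $\rho^R(y)\rho^L(x)=-\rho^R(y)\rho^R(x)$. A relative Rota-Baxter operator is a linear $T:V\to\mathfrak{g}$ with $[Tv_1,Tv_2]_{\mathfrak{g}}=T(\rho^L(Tv_1)v_2+\rho^R(Tv_2)v_1)$.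 $C^k(V,\mathfrak{g})=\mathrm{Hom}(\otimes^kV,\mathfrak{g})$ and $\partial_T:C^k\to C^{k+1}$ is $(\partial_Tf)(v_1,\dots,v_{k+1})=\sum_{i=1}^k(-1)^{i+1}[Tv_i,f(v_1,\dots,\hat v_i,\dots,v_{k+1})]_{\mathfrak{g}}-\sum_{i=1}^k(-1)^{i+1}T\rho^R(f(v_1,\dots,\hat v_i,\dots,v_{k+1}))v_i+(-1)^{k+1}[f(v_1,\dots,v_k),Tv_{k+1}]_{\mathfrak{g}}+(-1)^kT\rho^L(f(v_1,\dots,v_k))v_{k+1}+\sum_{1\le i<j\le k+1}(-1)^if(v_1,\dots,\hat v_i,\dots,v_{j-1},\rho^L(Tv_i)v_j+\rho^R(Tv_j)v_i,v_{j+1},\dots,v_{k+1})$. An order $n$ deformation of $T$ is $T_t=\sum_{i=0}^n\mathfrak{T}_it^i$ with $\mathfrak{T}_0=T$, $\mathfrak{T}_i\in\mathrm{Hom}(V,\mathfrak{g})$, viewed as a $\mathbf{K}[t]/(t^{n+1})$-module map $V[t]/(t^{n+1})\to\mathfrak{g}[t]/(t^{n+1})$ (bracket and $\rho^L,\rho^R$ extended $\mathbf{K}[t]/(t^{n+1})$-bilinearly), such that $[T_t(u),T_t(v)]_{\mathfrak{g}}=T_t(\rho^L(T_t(u))v+\rho^R(T_t(v))u)$ for all $u,v\in V$; equivalently $\sum_{k+l=i,\,k,l\ge0}\big([\mathfrak{T}_ku,\mathfrak{T}_lv]_{\mathfrak{g}}-\mathfrak{T}_k(\rho^L(\mathfrak{T}_lu)v+\rho^R(\mathfrak{T}_lv)u)\big)=0$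 for $0\le i\le n$. *)

theory Defs
  imports Complex_Main
begin

definition leibniz_algebra ::
  "('k::field \<Rightarrow> 'g::ab_group_add \<Rightarrow> 'g) \<Rightarrow> ('g \<Rightarrow> 'g \<Rightarrow> 'g) \<Rightarrow> bool" where
  "leibniz_algebra sG br \<longleftrightarrow>
     vector_space sG \<and>
     (\<forall>x. Vector_Spaces.linear sG sG (br x)) \<and>
     (\<forall>y. Vector_Spaces.linear sG sG (\<lambda>x. br x y)) \<and>
     (\<forall>x y z. br x (br y z) = br (br x y) z + br y (br x z))"

definition leibniz_rep ::
  "('k::field \<Rightarrow> 'g::ab_group_add \<Rightarrow> 'g) \<Rightarrow> ('g \<Rightarrow> 'g \<Rightarrow> 'g) \<Rightarrow>
   ('k \<Rightarrow> 'v::ab_group_add \<Rightarrow> 'v) \<Rightarrow> ('g \<Rightarrow> 'v \<Rightarrow> 'v) \<Rightarrow> ('g \<Rightarrow> 'v \<Rightarrow> 'v) \<Rightarrow> bool" where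
  "leibniz_rep sG br sV rhoL rhoR \<longleftrightarrow>
     vector_space sV \<and>
     (\<forall>x. Vector_Spaces.linear sV sV (rhoL x)) \<and>
     (\<forall>x. Vector_Spaces.linear sV sV (rhoR x)) \<and>
     (\<forall>v. Vector_Spaces.linear sG sV (\<lambda>x. rhoL x v)) \<and>
     (\<forall>v. Vector_Spaces.linear sG sV (\<lambda>x. rhoR x v)) \<and>
     (\<forall>x y v. rhoL (br x y) v = rhoL x (rhoL y v) - rhoL y (rhoL x v)) \<and>
     (\<forall>x y v. rhoR (br x y) v = rhoL x (rhoR y v) - rhoR y (rhoL x v)) \<and>
     (\<forall>x y v. rhoR y (rhoL x v) = - rhoR y (rhoR x v))"

definition relative_RB ::
  "('k::field \<Rightarrow> 'g::ab_group_add \<Rightarrow> 'g) \<Rightarrow> ('g \<Rightarrow> 'g \<Rightarrow> 'g) \<Rightarrow>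
   ('k \<Rightarrow> 'v::ab_group_add \<Rightarrow> 'v) \<Rightarrow> ('g \<Rightarrow> 'v \<Rightarrow> 'v) \<Rightarrow> ('g \<Rightarrow> 'v \<Rightarrow> 'v) \<Rightarrow>
   ('v \<Rightarrow> 'g) \<Rightarrow> bool" where
  "relative_RB sG br sV rhoL rhoR T \<longleftrightarrow>
     Vector_Spaces.linear sV sG T \<and>
     (\<forall>v1 v2. br (T v1) (T v2) = T (rhoL (T v1) v2 + rhoR (T v2) v1))"

text \<open>Order n deformation T_t = sum_{i=0}^n TT i t^i of T, via the equivalent
  coefficientwise equations given in the paper.\<close>
definition order_n_deformation ::
  "('k::field \<Rightarrow> 'g::ab_group_add \<Rightarrow> 'g) \<Rightarrow> ('g \<Rightarrow> 'g \<Rightarrow> 'g) \<Rightarrow>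
   ('k \<Rightarrow> 'v::ab_group_add \<Rightarrow> 'v) \<Rightarrow> ('g \<Rightarrow> 'v \<Rightarrow> 'v) \<Rightarrow> ('g \<Rightarrow> 'v \<Rightarrow> 'v) \<Rightarrow>
   ('v \<Rightarrow> 'g) \<Rightarrow> nat \<Rightarrow> (nat \<Rightarrow> 'v \<Rightarrow> 'g) \<Rightarrow> bool" where
  "order_n_deformation sG br sV rhoL rhoR T n TT \<longleftrightarrow>
     TT 0 = T \<and>
     (\<forall>i\<le>n. Vector_Spaces.linear sV sG (TT i)) \<and>
     (\<forall>i\<le>n. \<forall>u v. (\<Sum>k=0..i. br (TT k u) (TT (i - k) v)
                   - TT k (rhoL (TT (i - k) u) v + rhoR (TT (i - k) v) u)) = 0)"

definition obstruction ::
  "('g::ab_group_add \<Rightarrow> 'g \<Rightarrow> 'g) \<Rightarrow> ('g \<Rightarrow> 'v \<Rightarrow> 'v) \<Rightarrow> ('g \<Rightarrow> 'v \<Rightarrow> 'v) \<Rightarrow>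
   nat \<Rightarrow> (nat \<Rightarrow> 'v::ab_group_add \<Rightarrow> 'g) \<Rightarrow> 'v \<Rightarrow> 'v \<Rightarrow> 'g" where
  "obstruction br rhoL rhoR n TT u v =
     (\<Sum>i=1..n. br (TT i u) (TT (n + 1 - i) v)
        - TT i (rhoL (TT (n + 1 - i) u) v + rhoR (TT (n + 1 - i) v) u))"

text \<open>k-cochains: functions of a list of k vectors (the list [v_1,...,v_k]).
  Coboundary d_T f evaluated on a list vs = [v_1,...,v_{k+1}] (1-based v_i = vs ! (i-1)).\<close>
definition coboundary ::
  "('k::field \<Rightarrow> 'g::ab_group_add \<Rightarrow> 'g) \<Rightarrow> ('g \<Rightarrow> 'g \<Rightarrow> 'g) \<Rightarrow>
   ('g \<Rightarrow> 'v::ab_group_add \<Rightarrow> 'v) \<Rightarrow> ('g \<Rightarrow> 'v \<Rightarrow> 'v) \<Rightarrow> ('v \<Rightarrow> 'g) \<Rightarrow>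
   nat \<Rightarrow> ('v list \<Rightarrow> 'g) \<Rightarrow> 'v list \<Rightarrow> 'g" where
  "coboundary sG br rhoL rhoR T k f vs =
     (let v = (\<lambda>i. vs ! (i - 1));
          del = (\<lambda>i ws. take (i - 1) ws @ drop i ws)
      in (\<Sum>i=1..k. sG ((-1) ^ (i + 1)) (br (T (v i)) (f (del i vs))))
       - (\<Sum>i=1..k. sG ((-1) ^ (i + 1)) (T (rhoR (f (del i vs)) (v i))))
       + sG ((-1) ^ (k + 1)) (br (f (take k vs)) (T (v (k + 1))))
       + sG ((-1) ^ k) (T (rhoL (f (take k vs)) (v (k + 1))))
       + (\<Sum>j=1..k+1. \<Sum>i=1..<j. sG ((-1) ^ i)
            (f (del i (vs[j - 1 := rhoL (T (v i)) (v j) + rhoR (T (v j)) (v i)])))))"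

end

theory Submission
  imports Defs
begin

lemma lin_add: "Vector_Spaces.linear s1 s2 f \<Longrightarrow> f (x + y) = f x + f y"
  by (metis module_hom.add linear_iff_module_hom)

lemma addD: assumes "\<And>x y. f (x + y) = f x + f (y::'a::ab_group_add)"
  shows "f (x - y) = f x - (f y :: 'b::ab_group_add)" "f (- x) = - f x" "f 0 = 0"
    "f (sum g A) = (\<Sum>i\<in>A. f (g i))"
proof -
  interpret additive f by unfold_locales (rule assms)
  show "f (x - y) = f x - f y" "f (- x) = - f x" "f 0 = 0" "f (sum g A) = (\<Sum>i\<in>A. f (g i))"
    by (simp_all add: diff minus zero sum)
qed

locale LS =
  fixes br :: "'g::ab_group_add \<Rightarrow> 'g \<Rightarrow> 'g" and rL rR :: "'g \<Rightarrow> 'v::ab_group_add \<Rightarrow> 'v"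
  assumes br_addL: "br (x + y) z = br x z + br y z"
    and br_addR: "br x (y + z) = br x y + br x z"
    and rL_addL: "rL (x + y) v = rL x v + rL y v"
    and rL_addR: "rL x (v + w) = rL x v + rL x w"
    and rR_addL: "rR (x + y) v = rR x v + rR y v"
    and rR_addR: "rR x (v + w) = rR x v + rR x w"
    and leib: "br x (br y z) = br (br x y) z + br y (br x z)"
    and rep1: "rL (br x y) v = rL x (rL y v) - rL y (rL x v)"
    and rep2: "rR (br x y) v = rL x (rR y v) - rR y (rL x v)"
    and rep3: "rR y (rL x v) = - rR y (rR x v)"
begin

lemmas brL = addD[where f="\<lambda>x. br x z" for z, OF br_addL]
lemmas brR = addD[where f="\<lambda>y. br x y" for x, OF br_addR]
lemmas rLL = addD[where f="\<lambda>x. rL x z" for z, OF rL_addL]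
lemmas rLR = addD[where f="\<lambda>y. rL x y" for x, OF rL_addR]
lemmas rRL = addD[where f="\<lambda>x. rR x z" for z, OF rR_addL]
lemmas rRR = addD[where f="\<lambda>y. rR x y" for x, OF rR_addR]

lemmas adds = br_addL br_addR rL_addL rL_addR rR_addL rR_addR brL(1-3) brR(1-3) rLL(1-3) rLR(1-3)
   rRL(1-3) rRR(1-3)

lemma leib': "br (br x y) z = br x (br y z) - br y (br x z)"
  using leib[of x y z] by (simp add: algebra_simps)

lemma rep3': "rR y (rL x v) = - rR y (rR x v)" by (rule rep3)

definition circ :: "('v \<Rightarrow> 'g) \<Rightarrow> 'v \<Rightarrow> 'v \<Rightarrow> 'v" where
  "circ P u v = rL (P u) v + rR (P v) u"
definition BB :: "('v \<Rightarrow> 'g) \<Rightarrow> ('v \<Rightarrow> 'g) \<Rightarrow> 'v \<Rightarrow> 'v \<Rightarrow> 'g" where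
  "BB P Q u v = br (P u) (Q v) - P (circ Q u v)"
definition DD :: "('v \<Rightarrow> 'g) \<Rightarrow> ('v \<Rightarrow> 'v \<Rightarrow> 'g) \<Rightarrow> 'v \<Rightarrow> 'v \<Rightarrow> 'v \<Rightarrow> 'g" where
  "DD P f v1 v2 v3 = br (P v1) (f v2 v3) - br (P v2) (f v1 v3) - P (rR (f v2 v3) v1)
     + P (rR (f v1 v3) v2) - br (f v1 v2) (P v3) + P (rL (f v1 v2) v3)
     - f (circ P v1 v2) v3 - f v2 (circ P v1 v3) + f v1 (circ P v2 v3)"

context
  fixes X :: "nat \<Rightarrow> 'v \<Rightarrow> 'g" and v1 v2 v3 :: 'v
  assumes Xadd: "\<And>k x y. X k (x + y) = X k x + X k y"
begin

lemmas XX = addD[where f="X k" for k, OF Xadd] Xadd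

definition G0 where "G0 a b c =
  br (X a v1) (br (X b v2) (X c v3))
  - br (X a v1) (X b (rL (X c v2) v3))
  - br (X a v1) (X b (rR (X c v3) v2))
  + br (X a v2) (X b (rL (X c v1) v3))
  + br (X a v2) (X b (rR (X c v3) v1))
  - X a (rR (br (X b v2) (X c v3)) v1)
  + X a (rR (X b (rL (X c v2) v3)) v1)
  + X a (rR (X b (rR (X c v3) v2)) v1)
  + X a (rR (br (X b v1) (X c v3)) v2)
  - X a (rR (X b (rL (X c v1) v3)) v2)
  - X a (rR (X b (rR (X c v3) v1)) v2)
  + br (X b (rL (X c v1) v2)) (X a v3)
  + br (X b (rR (X c v2) v1)) (X a v3)
  + X a (rL (br (X b v1) (X c v2)) v3)
  - X a (rL (X b (rL (X c v1) v2)) v3)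
  - X a (rL (X b (rR (X c v2) v1)) v3)"

definition G1 where "G1 a b c =
  - br (X a v2) (br (X b v1) (X c v3))
  + X b (rR (X c v3) (rL (X a v1) v2))
  + X b (rR (X c v3) (rR (X a v2) v1))
  + X b (rL (X c v2) (rL (X a v1) v3))"

definition G2 where "G2 a b c =
  - br (X b (rL (X a v1) v2)) (X c v3)
  - br (X b (rR (X a v2) v1)) (X c v3)"

definition G3 where "G3 a b c =
  - br (br (X b v1) (X c v2)) (X a v3)
  + X b (rL (X c (rL (X a v1) v2)) v3)
  + X b (rL (X c (rR (X a v2) v1)) v3)
  - br (X b v2) (X c (rL (X a v1) v3))
  - br (X b v2) (X c (rR (X a v3) v1))
  + X b (rL (X c v2) (rR (X a v3) v1))
  + X b (rR (X c (rL (X a v1) v3)) v2)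
  + X b (rR (X c (rR (X a v3) v1)) v2)
  + br (X b v1) (X c (rL (X a v2) v3))
  + br (X b v1) (X c (rR (X a v3) v2))
  - X b (rL (X c v1) (rL (X a v2) v3))
  - X b (rL (X c v1) (rR (X a v3) v2))
  - X b (rR (X c (rL (X a v2) v3)) v1)
  - X b (rR (X c (rR (X a v3) v2)) v1)"

lemma DDsplit: "DD (X a) (BB (X b) (X c)) v1 v2 v3 = G0 a b c + G1 a b c + G2 a b c + G3 a b c"
  unfolding DD_def BB_def circ_def G0_def G1_def G2_def G3_def
  by (simp add: adds XX algebra_simps)

lemma cancel: "G0 a b c + G1 b a c + G2 c b a + G3 c a b = 0"
  unfolding G0_def G1_def G2_def G3_def
  by (simp add: adds XX leib' rep1 rep2 rep3 algebra_simps)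

end

lemma DD_add: assumes "\<And>x y. P (x + y) = P x + P y"
  shows "DD P (\<lambda>u v. f u v + g u v) v1 v2 v3 = DD P f v1 v2 v3 + DD P g v1 v2 v3"
  unfolding DD_def using addD[where f=P, OF assms] assms by (simp add: adds algebra_simps)

lemma DD_zero: assumes "\<And>x y. P (x + y) = P x + P y"
  shows "DD P (\<lambda>u v. 0) v1 v2 v3 = 0"
  unfolding DD_def using addD[where f=P, OF assms] assms by (simp add: adds algebra_simps)

lemma DD_sum: assumes "\<And>x y. P (x + y) = P x + P y" and "finite A"
  shows "DD P (\<lambda>u v. \<Sum>i\<in>A. f i u v) v1 v2 v3 = (\<Sum>i\<in>A. DD P (f i) v1 v2 v3)"
  using assms(2)
proof (induction A rule: finite_induct)
  case empty then show ?case using DD_zero[OF assms(1)] by simp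
next
  case (insert x F)
  then show ?case using DD_add[OF assms(1), of "f x" "\<lambda>u v. \<Sum>i\<in>F. f i u v"] by simp
qed

end

definition S3 :: "nat \<Rightarrow> (nat \<times> nat \<times> nat) set" where
  "S3 m = {(a,b,c). a + b + c = m}"

lemma S3_nested: "(\<Sum>(a,b,c)\<in>S3 m. F a b c) = (\<Sum>a\<le>m. \<Sum>b\<le>m-a. F a b (m-a-b))"
proof -
  have "(\<Sum>a\<le>m. \<Sum>b\<le>m-a. F a b (m-a-b)) = (\<Sum>(a,b)\<in>Sigma {..m} (\<lambda>a. {..m-a}). F a b (m-a-b))"
    by (rule sum.Sigma) auto
  also have "\<dots> = (\<Sum>(a,b,c)\<in>S3 m. F a b c)"
    by (rule sum.reindex_bij_witness[of _ "\<lambda>(a,b,c). (a,b)" "\<lambda>(a,b). (a,b,m-a-b)"])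
       (auto simp: S3_def)
  finally show ?thesis by simp
qed

lemma S3_p1: "(\<Sum>(a,b,c)\<in>S3 m. F b a c) = (\<Sum>(a,b,c)\<in>S3 m. F a b c)"
  by (rule sum.reindex_bij_witness[of _ "\<lambda>(a,b,c). (b,a,c)" "\<lambda>(a,b,c). (b,a,c)"])
     (auto simp: S3_def)
lemma S3_p2: "(\<Sum>(a,b,c)\<in>S3 m. F c b a) = (\<Sum>(a,b,c)\<in>S3 m. F a b c)"
  by (rule sum.reindex_bij_witness[of _ "\<lambda>(a,b,c). (c,b,a)" "\<lambda>(a,b,c). (c,b,a)"])
     (auto simp: S3_def)
lemma S3_p3: "(\<Sum>(a,b,c)\<in>S3 m. F c a b) = (\<Sum>(a,b,c)\<in>S3 m. F a b c)"
  by (rule sum.reindex_bij_witness[of _ "\<lambda>(a,b,c). (b,c,a)" "\<lambda>(a,b,c). (c,a,b)"])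
     (auto simp: S3_def)

lemma (in LS) total_zero:
  assumes Xadd: "\<And>k x y. X k (x + y) = X k x + X k y"
  shows "(\<Sum>(a,b,c)\<in>S3 m. DD (X a) (BB (X b) (X c)) v1 v2 v3) = 0"
proof -
  have "(\<Sum>(a,b,c)\<in>S3 m. DD (X a) (BB (X b) (X c)) v1 v2 v3)
    = (\<Sum>(a,b,c)\<in>S3 m. G0 X v1 v2 v3 a b c) + (\<Sum>(a,b,c)\<in>S3 m. G1 X v1 v2 v3 a b c)
      + (\<Sum>(a,b,c)\<in>S3 m. G2 X v1 v2 v3 a b c) + (\<Sum>(a,b,c)\<in>S3 m. G3 X v1 v2 v3 a b c)"
    unfolding sum.distrib[symmetric]
    by (rule sum.cong) (auto intro: DDsplit[OF Xadd])
  also have "\<dots> = (\<Sum>(a,b,c)\<in>S3 m. G0 X v1 v2 v3 a b c) + (\<Sum>(a,b,c)\<in>S3 m. G1 X v1 v2 v3 b a c)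
      + (\<Sum>(a,b,c)\<in>S3 m. G2 X v1 v2 v3 c b a) + (\<Sum>(a,b,c)\<in>S3 m. G3 X v1 v2 v3 c a b)"
    by (simp only: S3_p1[of "G1 X v1 v2 v3"] S3_p2[of "G2 X v1 v2 v3"] S3_p3[of "G3 X v1 v2 v3"])
  also have "\<dots> = (\<Sum>(a,b,c)\<in>S3 m. G0 X v1 v2 v3 a b c + G1 X v1 v2 v3 b a c
      + G2 X v1 v2 v3 c b a + G3 X v1 v2 v3 c a b)"
    by (simp add: sum.distrib case_prod_beta)
  also have "\<dots> = 0" by (simp add: cancel[OF Xadd] case_prod_beta)
  finally show ?thesis .
qed


lemma sum_S3_split:
  "(\<Sum>(a,b,c)\<in>S3 (Suc n). F a b c) = (\<Sum>b\<le>Suc n. F 0 b (Suc n - b))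
     + (\<Sum>i\<le>n. \<Sum>b\<le>n-i. F (Suc i) b (n - i - b))"
  unfolding S3_nested by (subst sum.atMost_Suc_shift) simp

theorem proposition3p24:
  fixes sG :: "'k::field \<Rightarrow> 'g::ab_group_add \<Rightarrow> 'g"
    and sV :: "'k \<Rightarrow> 'v::ab_group_add \<Rightarrow> 'v"
    and br :: "'g \<Rightarrow> 'g \<Rightarrow> 'g"
    and rhoL rhoR :: "'g \<Rightarrow> 'v \<Rightarrow> 'v"
    and T :: "'v \<Rightarrow> 'g"
    and n :: nat
    and TT :: "nat \<Rightarrow> 'v \<Rightarrow> 'g"
  assumes "leibniz_algebra sG br"
    and "leibniz_rep sG br sV rhoL rhoR"
    and "relative_RB sG br sV rhoL rhoR T"
    and "order_n_deformation sG br sV rhoL rhoR T n TT"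
  shows "\<forall>v1 v2 v3. coboundary sG br rhoL rhoR T 2
           (\<lambda>vs. obstruction br rhoL rhoR n TT (vs ! 0) (vs ! 1)) [v1, v2, v3] = 0"
proof (intro allI)
  fix v1 v2 v3
  have LA: "leibniz_algebra sG br" by fact
  have LR: "leibniz_rep sG br sV rhoL rhoR" by fact
  have RB: "relative_RB sG br sV rhoL rhoR T" by fact
  have DF: "order_n_deformation sG br sV rhoL rhoR T n TT" by fact
  have vsG: "vector_space sG" using LA unfolding leibniz_algebra_def by blast
  interpret LS br rhoL rhoR
  proof
    fix x y z :: 'g and v w :: 'v
    show "br (x + y) z = br x z + br y z"
      using LA lin_add[of sG sG "\<lambda>x. br x z" x y] unfolding leibniz_algebra_def by blast
    show "br x (y + z) = br x y + br x z"
      using LA lin_add[of sG sG "br x" y z] unfolding leibniz_algebra_def by blast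
    show "rhoL (x + y) v = rhoL x v + rhoL y v"
      using LR unfolding leibniz_rep_def by (metis lin_add)
    show "rhoL x (v + w) = rhoL x v + rhoL x w"
      using LR unfolding leibniz_rep_def by (metis lin_add)
    show "rhoR (x + y) v = rhoR x v + rhoR y v"
      using LR unfolding leibniz_rep_def by (metis lin_add)
    show "rhoR x (v + w) = rhoR x v + rhoR x w"
      using LR unfolding leibniz_rep_def by (metis lin_add)
    show "br x (br y z) = br (br x y) z + br y (br x z)"
      using LA unfolding leibniz_algebra_def by blast
    show "rhoL (br x y) v = rhoL x (rhoL y v) - rhoL y (rhoL x v)"
      using LR unfolding leibniz_rep_def by blast
    show "rhoR (br x y) v = rhoL x (rhoR y v) - rhoR y (rhoL x v)"
      using LR unfolding leibniz_rep_def by blast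
    show "rhoR y (rhoL x v) = - rhoR y (rhoR x v)"
      using LR unfolding leibniz_rep_def by blast
  qed
  define X where "X k = (if k \<le> n then TT k else (\<lambda>_. 0))" for k
  have TTadd: "TT k (x + y) = TT k x + TT k y" if "k \<le> n" for k x y
    using DF that unfolding order_n_deformation_def by (blast intro: lin_add)
  have Xadd: "X k (x + y) = X k x + X k y" for k x y
    using TTadd by (simp add: X_def)
  have Tadd: "T (x + y) = T x + T y" for x y
    using RB unfolding relative_RB_def by (blast intro: lin_add)
  have X0: "X 0 = T" using DF by (simp add: X_def order_n_deformation_def)
  have Xz: "X (Suc n) = (\<lambda>_. 0)" by (simp add: X_def)
  have deform: "(\<Sum>b\<le>m. BB (X b) (X (m - b)) u v) = 0" if "m \<le> n" for m u v
  proof -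
    have "(\<Sum>b\<le>m. BB (X b) (X (m - b)) u v) = (\<Sum>k=0..m. br (TT k u) (TT (m - k) v)
                   - TT k (rhoL (TT (m - k) u) v + rhoR (TT (m - k) v) u))"
      unfolding atMost_atLeast0 using that
      by (intro sum.cong) (auto simp: X_def BB_def circ_def)
    also have "\<dots> = 0" using DF that unfolding order_n_deformation_def by blast
    finally show ?thesis .
  qed
  have ob: "obstruction br rhoL rhoR n TT u v = (\<Sum>b\<le>Suc n. BB (X b) (X (Suc n - b)) u v)" for u v
  proof -
    have "(\<Sum>b\<le>Suc n. BB (X b) (X (Suc n - b)) u v) = BB (X 0) (X (Suc n)) u v
       + (\<Sum>b=1..n. BB (X b) (X (Suc n - b)) u v) + BB (X (Suc n)) (X 0) u v"
      by (simp add: sum.atMost_Suc atMost_atLeast0 sum.atLeast_Suc_atMost)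
    also have "BB (X 0) (X (Suc n)) u v = 0"
      using addD[where f=T, OF Tadd] by (simp add: Xz BB_def circ_def X0 adds)
    also have "BB (X (Suc n)) (X 0) u v = 0"
      by (simp add: Xz BB_def circ_def X0 adds)
    also have "(\<Sum>b=1..n. BB (X b) (X (Suc n - b)) u v) = obstruction br rhoL rhoR n TT u v"
      unfolding obstruction_def
    proof (rule sum.cong[OF refl])
      fix b assume "b \<in> {1..n}"
      then have h: "X b = TT b" "X (Suc n - b) = TT (n + 1 - b)" by (auto simp: X_def)
      show "BB (X b) (X (Suc n - b)) u v = br (TT b u) (TT (n + 1 - b) v)
        - TT b (rhoL (TT (n + 1 - b) u) v + rhoR (TT (n + 1 - b) v) u)"
        unfolding h BB_def circ_def ..
    qed
    finally show ?thesis by simp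
  qed
  have main: "DD T (obstruction br rhoL rhoR n TT) v1 v2 v3 = 0"
  proof -
    have "DD T (obstruction br rhoL rhoR n TT) v1 v2 v3
        = (\<Sum>b\<le>Suc n. DD (X 0) (BB (X b) (X (Suc n - b))) v1 v2 v3)"
      unfolding ob X0 by (rule DD_sum[OF Tadd]) simp
    also have "\<dots> = (\<Sum>(a,b,c)\<in>S3 (Suc n). DD (X a) (BB (X b) (X c)) v1 v2 v3)"
    proof -
      have "(\<Sum>i\<le>n. \<Sum>b\<le>n-i. DD (X (Suc i)) (BB (X b) (X (n - i - b))) v1 v2 v3) = 0"
      proof (rule sum.neutral, rule ballI)
        fix i assume "i \<in> {..n}"
        have "(\<Sum>b\<le>n-i. DD (X (Suc i)) (BB (X b) (X (n - i - b))) v1 v2 v3)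
           = DD (X (Suc i)) (\<lambda>u v. \<Sum>b\<le>n-i. BB (X b) (X (n - i - b)) u v) v1 v2 v3"
          by (rule DD_sum[OF Xadd, symmetric]) simp
        also have "\<dots> = DD (X (Suc i)) (\<lambda>u v. 0) v1 v2 v3"
          using deform[of "n - i"] by simp
        also have "\<dots> = 0" by (rule DD_zero[OF Xadd])
        finally show "(\<Sum>b\<le>n-i. DD (X (Suc i)) (BB (X b) (X (n - i - b))) v1 v2 v3) = 0" .
      qed
      then show ?thesis
        by (simp only: sum_S3_split[where F="\<lambda>a b c. DD (X a) (BB (X b) (X c)) v1 v2 v3"]) simp
    qed
    also have "\<dots> = 0" by (rule total_zero[OF Xadd])
    finally show ?thesis .
  qed
  have e1: "{1..2::nat} = {1,2}" "{1..3::nat} = {1,2,3}" "{1..<2::nat} = {1}"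
     "{1..<3::nat} = {1,2}" "{1..<1::nat} = {}" by auto
  have sc: "sG 1 x = x" "sG (-1) x = - x" for x
    using vsG by (simp_all add: module_iff_vector_space[symmetric] module.scale_one module.scale_minus_left)
  show "coboundary sG br rhoL rhoR T 2
           (\<lambda>vs. obstruction br rhoL rhoR n TT (vs ! 0) (vs ! 1)) [v1, v2, v3] = 0"
    using main unfolding coboundary_def DD_def circ_def
    by (simp add: Let_def e1 sc numeral_2_eq_2 numeral_3_eq_3 algebra_simps)
qed

end
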